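(* For all integers $k,l\ge1$, $La^*([k]\times[l],\{\vee_2,\wedge_2\})=k+l-1$.
   Context: $[k]\times[l]$ is ordered coordinatewise. $\vee_2$ is the poset on three elements $a,b_1,b_2$ whose only relations are $a<b_1,a<b_2$; $\wedge_2$ is the poset on three elements $a,b_1,b_2$ whose only relations are $b_1<a,b_2<a$. For posets $P,R$, $P$ is a strong subposet of $R$ if there is an injection $i:P\to R$ with $p\le_P p'\iff i(p)\le_R i(p')$. A subset $F\subseteq Q$ is strong $\{\vee_2,\wedge_2\}$-free if neither $\vee_2$ nor $\wedge_2$ is a strong subposet of $F$ (induced order); $La^*(Q,\{\vee_2,\wedge_2\})$ is the maximum size of such a subset of $Q$. *)

theory Defs
  imports Main
begin

definition strong_subposet ::
  "'a set \<Rightarrow> ('a \<Rightarrow> 'a \<Rightarrow> bool) \<Rightarrow> 'b set \<Rightarrow> ('b \<Rightarrow> 'b \<Rightarrow> bool) \<Rightarrow> bool" where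
  "strong_subposet P leP R leR \<longleftrightarrow>
     (\<exists>i. inj_on i P \<and> i ` P \<subseteq> R \<and>
          (\<forall>p\<in>P. \<forall>p'\<in>P. leP p p' \<longleftrightarrow> leR (i p) (i p')))"

(* The three-element posets vee_2 and wedge_2 on elements a = 0, b1 = 1, b2 = 2. *)
definition three :: "nat set" where "three = {0, 1, 2}"

definition vee2_le :: "nat \<Rightarrow> nat \<Rightarrow> bool" where
  "vee2_le x y \<longleftrightarrow> x = y \<or> (x = 0 \<and> (y = 1 \<or> y = 2))"

definition wedge2_le :: "nat \<Rightarrow> nat \<Rightarrow> bool" where
  "wedge2_le x y \<longleftrightarrow> x = y \<or> ((x = 1 \<or> x = 2) \<and> y = 0)"

definition grid :: "nat \<Rightarrow> nat \<Rightarrow> (nat \<times> nat) set" where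
  "grid k l = {1..k} \<times> {1..l}"

definition grid_le :: "nat \<times> nat \<Rightarrow> nat \<times> nat \<Rightarrow> bool" where
  "grid_le p q \<longleftrightarrow> fst p \<le> fst q \<and> snd p \<le> snd q"

definition vw_free :: "(nat \<times> nat) set \<Rightarrow> bool" where
  "vw_free F \<longleftrightarrow> \<not> strong_subposet three vee2_le F grid_le
                 \<and> \<not> strong_subposet three wedge2_le F grid_le"

definition La_star_grid :: "nat \<Rightarrow> nat \<Rightarrow> nat" where
  "La_star_grid k l = Max (card ` {F. F \<subseteq> grid k l \<and> vw_free F})"

end

theory Submission
  imports Defs
begin

lemma vee_contra:
  assumes "p \<in> F" "q \<in> F" "r \<in> F"
    and "fst r = fst p" "snd p < snd r" "snd q = snd p" "fst p < fst q"
  shows "strong_subposet three vee2_le F grid_le"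
proof -
  define i where "i = (\<lambda>n::nat. if n = 0 then p else if n = 1 then r else q)"
  have "inj_on i three" unfolding inj_on_def three_def i_def using assms
    by (auto simp: prod_eq_iff)
  moreover have "i ` three \<subseteq> F" unfolding three_def i_def using assms by auto
  moreover have "\<forall>a\<in>three. \<forall>b\<in>three. vee2_le a b \<longleftrightarrow> grid_le (i a) (i b)"
    unfolding three_def i_def vee2_le_def grid_le_def using assms by auto
  ultimately show ?thesis unfolding strong_subposet_def by blast
qed

lemma upper:
  assumes "F \<subseteq> grid k l" "vw_free F"
  shows "card F \<le> k + l - 1"
proof -
  define cm where "cm = (\<lambda>p. \<forall>q\<in>F. fst q = fst p \<longrightarrow> snd q \<le> snd p)"
  define g where "g = (\<lambda>p. if cm p then fst p else k + snd p)"
  have nv: "\<not> strong_subposet three vee2_le F grid_le" using assms(2) vw_free_def by blast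
  have img: "g ` F \<subseteq> {1..k+l-1}"
  proof
    fix z assume "z \<in> g ` F"
    then obtain p where p: "p \<in> F" "z = g p" by auto
    show "z \<in> {1..k+l-1}"
    proof (cases "cm p")
      case True
      have "p \<in> {1..k} \<times> {1..l}" using p assms(1) unfolding grid_def by blast
      thus ?thesis using p True by (auto simp: g_def)
    next
      case False
      then obtain q where q: "q \<in> F" "fst q = fst p" "snd q > snd p" unfolding cm_def by force
      have "q \<in> {1..k} \<times> {1..l}" using q(1) assms(1) unfolding grid_def by blast
      hence "snd q \<le> l" by auto
      moreover have "z = k + snd p" using p(2) False by (simp add: g_def)
      moreover have "p \<in> {1..k} \<times> {1..l}" using p(1) assms(1) unfolding grid_def by blast
      ultimately show ?thesis using q(3) by auto
    qed
  qed
  have inj: "inj_on g F"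
  proof (rule inj_onI)
    fix p q assume pq: "p \<in> F" "q \<in> F" "g p = g q"
    have pm: "p \<in> {1..k} \<times> {1..l}" "q \<in> {1..k} \<times> {1..l}"
      using pq assms(1) unfolding grid_def by blast+
    show "p = q"
    proof (cases "cm p")
      case cp: True
      show ?thesis
      proof (cases "cm q")
        case True
        with cp pq show ?thesis unfolding g_def cm_def
          by (metis order_antisym prod_eq_iff)
      next
        case False
        have "fst p \<le> k" "fst q \<le> k" "snd p \<ge> 1" "snd q \<ge> 1" using pm by auto
        with cp pq(3) False show ?thesis by (simp add: g_def split: if_splits)
      qed
    next
      case cp: False
      show ?thesis
      proof (cases "cm q")
        case True
        have "fst p \<le> k" "fst q \<le> k" "snd p \<ge> 1" "snd q \<ge> 1" using pm by auto
        with cp pq(3) True show ?thesis by (simp add: g_def split: if_splits)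
      next
        case cq: False
        have sy: "snd p = snd q" using pq cp cq by (simp add: g_def)
        show ?thesis
        proof (rule ccontr)
          assume ne: "p \<noteq> q"
          hence "fst p \<noteq> fst q" using sy by (simp add: prod_eq_iff)
          hence "fst p < fst q \<or> fst q < fst p" by arith
          thus False
          proof
            assume lt: "fst p < fst q"
            obtain r where r: "r \<in> F" "fst r = fst p" "snd r > snd p" using cp unfolding cm_def by force
            have "strong_subposet three vee2_le F grid_le"
              by (rule vee_contra[of p F q r]) (use pq lt sy r in auto)
            with nv show False by blast
          next
            assume lt: "fst q < fst p"
            obtain r where r: "r \<in> F" "fst r = fst q" "snd r > snd q" using cq unfolding cm_def by force
            have "strong_subposet three vee2_le F grid_le"
              by (rule vee_contra[of q F p r]) (use pq lt sy r in auto)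
            with nv show False by blast
          qed
        qed
      qed
    qed
  qed
  have "card F = card (g ` F)" using inj by (simp add: card_image)
  also have "\<dots> \<le> card {1..k+l-1}" by (rule card_mono[OF _ img]) simp
  finally show ?thesis by simp
qed

lemma chain_free:
  assumes "\<forall>p\<in>F. \<forall>q\<in>F. grid_le p q \<or> grid_le q p"
  shows "vw_free F"
proof -
  have gen: "\<not> strong_subposet three R F grid_le" if "\<not> R 1 2" "\<not> R 2 1" for R
  proof
    assume "strong_subposet three R F grid_le"
    then obtain i where i: "i ` three \<subseteq> F" "\<forall>a\<in>three. \<forall>b\<in>three. R a b \<longleftrightarrow> grid_le (i a) (i b)"
      unfolding strong_subposet_def by blast
    have t: "(1::nat) \<in> three" "(2::nat) \<in> three" by (auto simp: three_def)
    have "i 1 \<in> F" "i 2 \<in> F" using i(1) t by auto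
    hence "grid_le (i 1) (i 2) \<or> grid_le (i 2) (i 1)" using assms by blast
    thus False using i(2) t that by blast
  qed
  have a: "\<not> strong_subposet three vee2_le F grid_le" by (rule gen) (simp_all add: vee2_le_def)
  have b: "\<not> strong_subposet three wedge2_le F grid_le" by (rule gen) (simp_all add: wedge2_le_def)
  show ?thesis unfolding vw_free_def using a b by blast
qed

theorem theorem1p5:
  fixes k l :: nat
  assumes "k \<ge> 1" and "l \<ge> 1"
  shows "La_star_grid k l = k + l - 1"
proof -
  define h where "h = (\<lambda>n. if n \<le> k then (n, 1::nat) else (k, n - k + 1))"
  define F0 where "F0 = h ` {1..k+l-1}"
  have "inj_on h {1..k+l-1}"
  proof (rule inj_onI)
    fix x y assume "x \<in> {1..k+l-1}" "y \<in> {1..k+l-1}" "h x = h y"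
    thus "x = y" unfolding h_def by (simp split: if_splits)
  qed
  hence c0: "card F0 = k + l - 1" unfolding F0_def by (simp add: card_image)
  have s0: "F0 \<subseteq> grid k l"
  proof
    fix p assume "p \<in> F0"
    then obtain n where n: "n \<in> {1..k+l-1}" "p = h n" unfolding F0_def by blast
    thus "p \<in> grid k l" unfolding grid_def h_def using assms by (simp split: if_splits)
  qed
  have mono: "grid_le (h m) (h n)" if "m \<le> n" for m n
    using that unfolding h_def grid_le_def by (auto split: if_splits)
  have f0: "vw_free F0"
  proof (rule chain_free, intro ballI)
    fix p q assume "p \<in> F0" "q \<in> F0"
    then obtain m n where "p = h m" "q = h n" unfolding F0_def by blast
    thus "grid_le p q \<or> grid_le q p" using mono nat_le_linear by metis
  qed
  have fin: "finite (card ` {F. F \<subseteq> grid k l \<and> vw_free F})"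
  proof (rule finite_imageI)
    have "finite (grid k l)" unfolding grid_def by simp
    thus "finite {F. F \<subseteq> grid k l \<and> vw_free F}" by simp
  qed
  have mem: "k + l - 1 \<in> card ` {F. F \<subseteq> grid k l \<and> vw_free F}"
  proof
    show "k + l - 1 = card F0" using c0 by simp
    show "F0 \<in> {F. F \<subseteq> grid k l \<and> vw_free F}" using s0 f0 by blast
  qed
  show ?thesis unfolding La_star_grid_def
  proof (rule Max_eqI[OF fin])
    fix y assume "y \<in> card ` {F. F \<subseteq> grid k l \<and> vw_free F}"
    then obtain F where "F \<subseteq> grid k l" "vw_free F" "y = card F" by blast
    thus "y \<le> k + l - 1" using upper by blast
  next
    show "k + l - 1 \<in> card ` {F. F \<subseteq> grid k l \<and> vw_free F}" by (rule mem)
  qed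
qed

end
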